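(* Let $n\geq 2$ and let $A$ be a commutative associative algebra over $\mathbb{C}$ equipped with $n-1$ pairwise commuting derivations $D_1,\ldots,D_{n-1}$. Define the $n$-ary bracket $$W(u_1,\ldots,u_n)=\det\begin{pmatrix} u_1 & \cdots & u_n\\ D_1u_1 & \cdots & D_1u_n\\ \vdots & & \vdots\\ D_{n-1}u_1 & \cdots & D_{n-1}u_n\end{pmatrix}$$ for $u_1,\ldots,u_n\in A$ (the determinant being computed using the commutative associative product of $A$). Then $(A,\cdot,W(\cdot,\ldots,\cdot))$ is a strong transposed Poisson $n$-Lie algebra.
   Context: An $n$-Lie algebra is a vector space $L$ with an $n$-linear skew-symmetric bracket $[\cdot,\ldots,\cdot]$ satisfying $[[x_1,\ldots,x_n],y_2,\ldots,y_n]=\sum_{i=1}^n[x_1,\ldots,x_{i-1},[x_i,y_2,\ldots,y_n],x_{i+1},\ldots,x_n]$ for all $x_i,y_j\in L$. A transposed Poisson $n$-Lie algebra is a triple $(A,\cdot,[\cdot,\ldots,\cdot])$ where $(A,\cdot)$ is a commutative associative algebra, $(A,[\cdot,\ldots,\cdot])$ is an $n$-Lie algebra, and for all $h,a_1,\ldots,a_n\in A$: $n\,h\,[a_1,\ldots,a_n]=\sum_{i=1}^n[a_1,\ldots,h a_i,\ldots,a_n]$ (with $ha_i$ in the $i$-th slot). It is called strong if moreover for all $h,y_1,y_2,x_1,\ldots,x_{n-1}\in A$: $$y_1[hy_2,x_1,\ldots,x_{n-1}]-y_2[hy_1,x_1,\ldots,x_{n-1}]+\sum_{i=1}^{n-1}(-1)^{i-1}hx_i[y_1,y_2,x_1,\ldots,\hat{x}_i,\ldots,x_{n-1}]=0,$$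 where $\hat{x}_i$ means $x_i$ is omitted. *)

theory Defs
  imports Complex_Main "HOL-Combinatorics.Permutations"
begin

text \<open>The algebra A is a type 'a of class comm_ring (commutative, associative,
 not necessarily unital ring) together with a scalar multiplication by complex
 numbers making it a commutative associative algebra over the complex field.
 n-ary brackets take an argument family u :: nat => 'a, slots 0..n-1.\<close>

definition complex_algebra :: "(complex \<Rightarrow> 'a::comm_ring \<Rightarrow> 'a) \<Rightarrow> bool" where
  "complex_algebra sm \<longleftrightarrow>
     (\<forall>a x y. sm a (x + y) = sm a x + sm a y) \<and>
     (\<forall>a b x. sm (a + b) x = sm a x + sm b x) \<and>
     (\<forall>a b x. sm (a * b) x = sm a (sm b x)) \<and>
     (\<forall>x. sm 1 x = x) \<and>
     (\<forall>a x y. sm a (x * y) = sm a x * y)"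

definition is_derivation :: "(complex \<Rightarrow> 'a::comm_ring \<Rightarrow> 'a) \<Rightarrow> ('a \<Rightarrow> 'a) \<Rightarrow> bool" where
  "is_derivation sm D \<longleftrightarrow>
     (\<forall>x y. D (x + y) = D x + D y) \<and>
     (\<forall>a x. D (sm a x) = sm a (D x)) \<and>
     (\<forall>x y. D (x * y) = D x * y + x * D y)"

text \<open>Product of f 0, ..., f (n-1) (n >= 1), without requiring a unit.\<close>
definition lprod :: "nat \<Rightarrow> (nat \<Rightarrow> 'a::comm_ring) \<Rightarrow> 'a" where
  "lprod n f = foldl (\<lambda>acc i. acc * f i) (f 0) [1..<n]"

definition ldet :: "nat \<Rightarrow> (nat \<Rightarrow> nat \<Rightarrow> 'a::comm_ring) \<Rightarrow> 'a" where
  "ldet n M = (\<Sum>p \<in> {p. p permutes {..<n}}.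
      (if evenperm p then lprod n (\<lambda>i. M i (p i)) else - lprod n (\<lambda>i. M i (p i))))"

definition wdet :: "(nat \<Rightarrow> 'a \<Rightarrow> 'a) \<Rightarrow> nat \<Rightarrow> (nat \<Rightarrow> 'a::comm_ring) \<Rightarrow> 'a" where
  "wdet D n u = ldet n (\<lambda>i j. if i = 0 then u j else D i (u j))"

definition args_only :: "nat \<Rightarrow> ((nat \<Rightarrow> 'a) \<Rightarrow> 'a) \<Rightarrow> bool" where
  "args_only n br \<longleftrightarrow> (\<forall>u v. (\<forall>i<n. u i = v i) \<longrightarrow> br u = br v)"

definition n_multilinear :: "(complex \<Rightarrow> 'a::comm_ring \<Rightarrow> 'a) \<Rightarrow> nat \<Rightarrow> ((nat \<Rightarrow> 'a) \<Rightarrow> 'a) \<Rightarrow> bool" where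
  "n_multilinear sm n br \<longleftrightarrow>
     (\<forall>u k a b x y. k < n \<longrightarrow>
        br (u(k := sm a x + sm b y)) = sm a (br (u(k := x))) + sm b (br (u(k := y))))"

definition skew_symmetric :: "nat \<Rightarrow> ((nat \<Rightarrow> 'a::comm_ring) \<Rightarrow> 'a) \<Rightarrow> bool" where
  "skew_symmetric n br \<longleftrightarrow>
     (\<forall>u i j. i < n \<longrightarrow> j < n \<longrightarrow> i \<noteq> j \<longrightarrow> br (u(i := u j, j := u i)) = - br u)"

text \<open>Filippov identity: x uses slots 0..n-1, y uses slots 1..n-1 (y_2..y_n).\<close>
definition filippov :: "nat \<Rightarrow> ((nat \<Rightarrow> 'a::comm_ring) \<Rightarrow> 'a) \<Rightarrow> bool" where
  "filippov n br \<longleftrightarrow>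
     (\<forall>x y. br (y(0 := br x)) = (\<Sum>i<n. br (x(i := br (y(0 := x i))))))"

definition n_Lie :: "(complex \<Rightarrow> 'a::comm_ring \<Rightarrow> 'a) \<Rightarrow> nat \<Rightarrow> ((nat \<Rightarrow> 'a) \<Rightarrow> 'a) \<Rightarrow> bool" where
  "n_Lie sm n br \<longleftrightarrow> args_only n br \<and> n_multilinear sm n br \<and> skew_symmetric n br \<and> filippov n br"

definition transposed_Poisson_n_Lie ::
  "(complex \<Rightarrow> 'a::comm_ring \<Rightarrow> 'a) \<Rightarrow> nat \<Rightarrow> ((nat \<Rightarrow> 'a) \<Rightarrow> 'a) \<Rightarrow> bool" where
  "transposed_Poisson_n_Lie sm n br \<longleftrightarrow>
     complex_algebra sm \<and> n_Lie sm n br \<and>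
     (\<forall>h a. sm (of_nat n) (h * br a) = (\<Sum>i<n. br (a(i := h * a i))))"

text \<open>Strong condition: x uses slots 1..n-1 (x_1..x_{n-1}).
 The bracket [y1, y2, x_1, .., x_i omitted, .., x_{n-1}] puts y1 in slot 0, y2 in slot 1,
 and the remaining x's in slots 2..n-1 in order.\<close>
definition strong_transposed_Poisson_n_Lie ::
  "(complex \<Rightarrow> 'a::comm_ring \<Rightarrow> 'a) \<Rightarrow> nat \<Rightarrow> ((nat \<Rightarrow> 'a) \<Rightarrow> 'a) \<Rightarrow> bool" where
  "strong_transposed_Poisson_n_Lie sm n br \<longleftrightarrow>
     transposed_Poisson_n_Lie sm n br \<and>
     (\<forall>h y1 y2 x.
        y1 * br (x(0 := h * y2)) - y2 * br (x(0 := h * y1))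
        + (\<Sum>i\<in>{1..n-1}. sm ((-1) ^ (i - 1))
             (h * x i * br (\<lambda>k. if k = 0 then y1 else if k = 1 then y2
                                 else if k - 1 < i then x (k - 1) else x k))) = 0)"

end

theory Submission
  imports Defs "Jordan_Normal_Form.Determinant"
begin


fun nsc :: "nat \<Rightarrow> 'a::comm_ring \<Rightarrow> 'a" where
  "nsc 0 x = 0" | "nsc (Suc k) x = x + nsc k x"

lemma nsc_add_n: "nsc (a + b) x = nsc a x + nsc b x"
  by (induction a) (auto simp: algebra_simps)
lemma nsc_add_x: "nsc a (x + y) = nsc a x + nsc a y"
  by (induction a) (auto simp: algebra_simps)
lemma nsc_minus: "nsc a (- x) = - nsc a x"
  by (induction a) (auto simp: algebra_simps)
lemma nsc_diff: "nsc a (x - y) = nsc a x - nsc a y"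
  by (induction a) (auto simp: algebra_simps)
lemma nsc_mult: "nsc (a * b) x = nsc a (nsc b x)"
  by (induction a) (auto simp: algebra_simps nsc_add_n nsc_add_x)
lemma nsc_times: "nsc a (x * y) = nsc a x * y"
  by (induction a) (auto simp: algebra_simps)

definition zsc :: "int \<Rightarrow> 'a::comm_ring \<Rightarrow> 'a" where
  "zsc m x = nsc (nat m) x - nsc (nat (- m)) x"

lemma nsc_rep:
  assumes "int a - int b = int c - int d"
  shows "nsc a x - nsc b x = nsc c x - nsc d x"
proof -
  have "a + d = c + b" using assms by linarith
  hence "nsc (a + d) x = nsc (c + b) x" by simp
  hence "nsc a x + nsc d x = nsc c x + nsc b x" by (simp add: nsc_add_n)
  thus ?thesis by (simp add: algebra_simps)
qed

lemma zsc_rep: "int a - int b = m \<Longrightarrow> zsc m x = nsc a x - nsc b x"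
  unfolding zsc_def by (rule nsc_rep) simp

lemma zsc_ex: "\<exists>a b. m = int a - int b"
  by (rule exI[of _ "nat m"], rule exI[of _ "nat (-m)"]) simp

lemma zsc_add_n: "zsc (m + k) x = zsc m x + zsc k x"
proof -
  obtain a b where 1: "m = int a - int b" using zsc_ex by blast
  obtain c d where 2: "k = int c - int d" using zsc_ex by blast
  show ?thesis using 1 2
    by (simp add: zsc_rep[of a b] zsc_rep[of c d] zsc_rep[of "a+c" "b+d"] nsc_add_n algebra_simps)
qed

lemma zsc_add_x: "zsc m (x + y) = zsc m x + zsc m y"
  unfolding zsc_def by (simp add: nsc_add_x algebra_simps)
lemma zsc_minus_x: "zsc m (- x) = - zsc m x"
  unfolding zsc_def by (simp add: nsc_minus algebra_simps)
lemma zsc_diff_x: "zsc m (x - y) = zsc m x - zsc m y"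
  unfolding zsc_def by (simp add: nsc_diff algebra_simps)
lemma zsc_times: "zsc m (x * y) = zsc m x * y"
  unfolding zsc_def by (simp add: nsc_times algebra_simps)
lemma zsc_times2: "zsc m (x * y) = x * zsc m y"
  using zsc_times[of m y x] by (simp add: mult.commute)
lemma zsc_pull: "zsc m x * y = zsc m (x*y)" "x * zsc m y = zsc m (x*y)"
  by (rule zsc_times[symmetric], rule zsc_times2[symmetric])
lemma zsc_0[simp]: "zsc 0 x = 0" unfolding zsc_def by simp
lemma zsc_1[simp]: "zsc 1 x = x" unfolding zsc_def by simp
lemma zsc_x0[simp]: "zsc m 0 = 0"
  using zsc_add_x[of m 0 0] by simp
lemma zsc_mult: "zsc (m * k) x = zsc m (zsc k x)"
proof -
  obtain a b where m: "m = int a - int b" using zsc_ex by blast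
  obtain c d where k: "k = int c - int d" using zsc_ex by blast
  have mk: "int (a*c + b*d) - int (a*d + b*c) = m * k" unfolding m k by (simp add: algebra_simps)
  have 1: "zsc (m*k) x = nsc (a*c+b*d) x - nsc (a*d+b*c) x" by (rule zsc_rep[OF mk])
  have 2: "zsc k x = nsc c x - nsc d x" by (rule zsc_rep) (simp add: k)
  have 3: "zsc m y = nsc a y - nsc b y" for y by (rule zsc_rep) (simp add: m)
  show ?thesis unfolding 1 2 3 by (simp add: nsc_add_n nsc_mult nsc_diff algebra_simps)
qed
lemma zsc_comm: "zsc m (zsc k x) = zsc k (zsc m x)"
  by (metis zsc_mult mult.commute)
lemma zsc_minus_n: "zsc (- m) x = - zsc m x"
  unfolding zsc_def by simp

datatype 'a uz = UZ int 'a

instantiation uz :: (comm_ring) comm_ring_1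
begin
fun plus_uz where "plus_uz (UZ m a) (UZ k b) = UZ (m + k) (a + b)"
fun times_uz where "times_uz (UZ m a) (UZ k b) = UZ (m * k) (zsc m b + zsc k a + a * b)"
fun uminus_uz where "uminus_uz (UZ m a) = UZ (- m) (- a)"
fun minus_uz where "minus_uz (UZ m a) (UZ k b) = UZ (m - k) (a - b)"
definition zero_uz where "zero_uz = UZ 0 0"
definition one_uz where "one_uz = UZ 1 0"
instance
proof
  fix x y z :: "'a uz"
  show "x * y * z = x * (y * z)"
    by (cases x; cases y; cases z)
      (simp add: zsc_add_x zsc_mult zsc_pull algebra_simps zsc_comm)
  show "x * y = y * x"
    by (cases x; cases y) (simp add: algebra_simps)
  show "1 * x = x" by (cases x) (simp add: one_uz_def)
  show "x + y + z = x + (y + z)" by (cases x; cases y; cases z) simp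
  show "x + y = y + x" by (cases x; cases y) simp
  show "0 + x = x" by (cases x) (simp add: zero_uz_def)
  show "- x + x = 0" by (cases x) (simp add: zero_uz_def)
  show "x - y = x + - y" by (cases x; cases y) simp
  show "(x + y) * z = x * z + y * z"
    by (cases x; cases y; cases z) (simp add: zsc_add_x zsc_add_n algebra_simps)
  show "(0::'a uz) \<noteq> 1" by (simp add: zero_uz_def one_uz_def)
qed
end

definition iota :: "'a::comm_ring \<Rightarrow> 'a uz" where "iota x = UZ 0 x"

lemma iota_add: "iota (x + y) = iota x + iota y" by (simp add: iota_def)
lemma iota_mult: "iota (x * y) = iota x * iota y" by (simp add: iota_def)
lemma iota_minus: "iota (- x) = - iota x" by (simp add: iota_def)
lemma iota_diff: "iota (x - y) = iota x - iota y" by (simp add: iota_def)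
lemma iota_0: "iota 0 = 0" by (simp add: iota_def zero_uz_def)
lemma iota_inj: "iota x = iota y \<longleftrightarrow> x = y" by (simp add: iota_def)
lemma iota_sum: "iota (sum f A) = (\<Sum>a\<in>A. iota (f a))"
  by (induct A rule: infinite_finite_induct) (auto simp: iota_0 iota_add)

definition liftD :: "('a::comm_ring \<Rightarrow> 'a) \<Rightarrow> 'a uz \<Rightarrow> 'a uz" where
  "liftD d x = (case x of UZ m a \<Rightarrow> UZ 0 (d a))"

lemma liftD_iota: "liftD d (iota x) = iota (d x)" by (simp add: liftD_def iota_def)

lemma add_zsc:
  assumes "\<And>x y. d (x + y) = d x + d y"
  shows "d (zsc m x) = zsc m (d x)"
proof -
  have z: "d 0 = 0" using assms[of 0 0] by simp
  have m: "d (- x) = - d x" for x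
  proof -
    have "d x + d (- x) = 0" using assms[of x "- x"] z by simp
    thus ?thesis by (simp add: eq_neg_iff_add_eq_0 add.commute)
  qed
  have n: "d (nsc a x) = nsc a (d x)" for a
  proof (induction a)
    case 0 then show ?case using z by simp
  next
    case (Suc a) then show ?case by (simp add: assms)
  qed
  have dd: "d (a - b) = d a - d b" for a b
  proof -
    have "d (a + - b) = d a + - d b" by (simp only: assms m)
    thus ?thesis by (simp only: diff_conv_add_uminus)
  qed
  show ?thesis unfolding zsc_def by (simp only: dd n)
qed

lemma liftD_add:
  assumes "\<And>x y. d (x + y) = d x + d y"
  shows "liftD d (x + y) = liftD d x + liftD d y"
  by (cases x; cases y) (simp add: liftD_def assms)

lemma liftD_mul:
  assumes "\<And>x y. d (x + y) = d x + d y" "\<And>x y. d (x * y) = d x * y + x * d y"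
  shows "liftD d (x * y) = liftD d x * y + x * liftD d y"
  by (cases x; cases y) (simp add: liftD_def assms add_zsc[OF assms(1)] algebra_simps)



definition dt :: "nat \<Rightarrow> (nat \<Rightarrow> nat \<Rightarrow> 'r::comm_ring_1) \<Rightarrow> 'r" where
  "dt n M = det (mat n n (\<lambda>(i,j). M i j))"

definition cf :: "nat \<Rightarrow> (nat \<Rightarrow> nat \<Rightarrow> 'r::comm_ring_1) \<Rightarrow> nat \<Rightarrow> nat \<Rightarrow> 'r" where
  "cf n M i j = cofactor (mat n n (\<lambda>(i,j). M i j)) i j"

lemma dt_ext: "(\<And>i j. i < n \<Longrightarrow> j < n \<Longrightarrow> M i j = N i j) \<Longrightarrow> dt n M = dt n N"
  unfolding dt_def by (rule arg_cong[of _ _ det]) (rule eq_matI, auto)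

lemma dt_row: "k < n \<Longrightarrow> dt n M = (\<Sum>j<n. M k j * cf n M k j)"
  unfolding dt_def cf_def by (subst laplace_expansion_row[of _ n k]) auto

lemma dt_col: "j < n \<Longrightarrow> dt n M = (\<Sum>i<n. M i j * cf n M i j)"
  unfolding dt_def cf_def by (subst laplace_expansion_column[of _ n j]) auto

lemma cf_indep:
  assumes "k < n" "l < n"
    and "\<And>i j. i < n \<Longrightarrow> j < n \<Longrightarrow> i \<noteq> k \<Longrightarrow> j \<noteq> l \<Longrightarrow> M i j = N i j"
  shows "cf n M k l = cf n N k l"
proof -
  have "mat_delete (mat n n (\<lambda>(i,j). M i j)) k l = mat_delete (mat n n (\<lambda>(i,j). N i j)) k l"
    unfolding mat_delete_def by (rule eq_matI) (auto intro!: assms(3))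
  thus ?thesis unfolding cf_def cofactor_def by simp
qed

lemma dt_row_upd: "k < n \<Longrightarrow> dt n (M(k := v)) = (\<Sum>j<n. v j * cf n M k j)"
  apply (subst dt_row[of k])
   apply simp
  apply (rule sum.cong, simp)
  apply simp
  apply (rule arg_cong[where f="\<lambda>x. v _ * x"])
  apply (rule cf_indep, auto)
  done

lemma dt_col_upd: "l < n \<Longrightarrow> dt n (\<lambda>i. (M i)(l := v i)) = (\<Sum>i<n. v i * cf n M i l)"
  apply (subst dt_col[of l])
   apply simp
  apply (rule sum.cong, simp)
  apply simp
  apply (rule arg_cong[where f="\<lambda>x. v _ * x"])
  apply (rule cf_indep, auto)
  done

lemma dt_rows_eq:
  assumes "k < n" "r < n" "k \<noteq> r" "\<And>j. j < n \<Longrightarrow> M k j = M r j"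
  shows "dt n M = 0"
  unfolding dt_def
  apply (rule det_identical_rows[of _ n k r])
  using assms by (auto intro!: eq_vecI simp: row_def)

lemma dt_swap:
  assumes "k < n" "r < n" "k \<noteq> r"
  shows "dt n (M(k := M r, r := M k)) = - dt n M"
proof -
  have "mat n n (\<lambda>(i,j). (M(k := M r, r := M k)) i j) = swaprows k r (mat n n (\<lambda>(i,j). M i j))"
    by (rule eq_matI) (use assms in auto)
  thus ?thesis unfolding dt_def using assms by (simp only:) (rule det_swaprows, auto)
qed

lemma dt_transpose: "dt n (\<lambda>i j. M j i) = dt n M"
proof -
  have "mat n n (\<lambda>(i,j). M j i) = transpose_mat (mat n n (\<lambda>(i,j). M i j))"
    by (rule eq_matI) auto
  thus ?thesis unfolding dt_def by (simp only:) (rule det_transpose, auto)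
qed

lemma cf_minor:
  assumes "i < n" "j < n"
  shows "cf n M i j = (-1)^(i+j) * dt (n-1) (\<lambda>r c. M (if r < i then r else Suc r) (if c < j then c else Suc c))"
proof -
  have "mat_delete (mat n n (\<lambda>(i,j). M i j)) i j
      = mat (n-1) (n-1) (\<lambda>(r,c). M (if r < i then r else Suc r) (if c < j then c else Suc c))"
    unfolding mat_delete_def by (rule eq_matI) auto
  thus ?thesis unfolding cf_def cofactor_def dt_def by simp
qed

lemma dt_leibniz: "dt n M = (\<Sum>p\<in>{p. p permutes {0..<n}}. signof p * (\<Prod>i=0..<n. M i (p i)))"
  unfolding dt_def
  apply (subst det_def'[of _ n], simp)
  apply (rule sum.cong, simp)
  apply (rule arg_cong[where f="\<lambda>x. _ * x"])
  apply (rule prod.cong, simp)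
  apply (auto simp: permutes_in_image)
  done

locale deriv_r =
  fixes d :: "'r::comm_ring_1 \<Rightarrow> 'r"
  assumes d_add: "d (x + y) = d x + d y"
    and d_mul: "d (x * y) = d x * y + x * d y"
begin

lemma d_zero[simp]: "d 0 = 0"
  using d_add[of 0 0] by simp

lemma d_uminus: "d (- x) = - d x"
  by (metis add_left_cancel d_add d_zero right_minus)

lemma d_diff: "d (x - y) = d x - d y"
  using d_add[of x "-y"] by (simp add: d_uminus)

lemma d_sum: "d (sum f A) = (\<Sum>a\<in>A. d (f a))"
  by (induct A rule: infinite_finite_induct) (auto simp: d_add)

lemma d_one[simp]: "d 1 = 0"
  using d_mul[of 1 1] by simp

lemma d_signof: "d (signof p * x) = signof p * d x"
  by (simp add: d_mul sign_def d_uminus)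

lemma d_prod: fixes f :: "nat \<Rightarrow> 'r" shows "d (\<Prod>i=0..<n. f i) = (\<Sum>k<n. \<Prod>i=0..<n. (f(k := d (f k))) i)"
proof (induction n)
  case 0 then show ?case by simp
next
  case (Suc n)
  have e1: "(\<Prod>i=0..<n. (f(n := v)) i) = (\<Prod>i=0..<n. f i)" for v
    by (rule prod.cong) auto
  have "d (\<Prod>i=0..<Suc n. f i) = d ((\<Prod>i=0..<n. f i) * f n)" by simp
  also have "\<dots> = (\<Sum>k<n. \<Prod>i=0..<n. (f(k := d (f k))) i) * f n + (\<Prod>i=0..<n. f i) * d (f n)"
    by (simp add: d_mul Suc.IH)
  also have "\<dots> = (\<Sum>k<Suc n. \<Prod>i=0..<Suc n. (f(k := d (f k))) i)"
    by (simp add: sum_distrib_right e1)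
  finally show ?case .
qed

lemma dt_deriv: "d (dt n M) = (\<Sum>k<n. dt n (M(k := \<lambda>j. d (M k j))))"
proof -
  have "d (dt n M) = (\<Sum>p\<in>{p. p permutes {0..<n}}. signof p * (\<Sum>k<n. \<Prod>i=0..<n. ((\<lambda>i. M i (p i))(k := d (M k (p k)))) i))"
    unfolding dt_leibniz d_sum d_signof d_prod by simp
  also have "\<dots> = (\<Sum>p\<in>{p. p permutes {0..<n}}. \<Sum>k<n. signof p * (\<Prod>i=0..<n. (M(k := \<lambda>j. d (M k j))) i (p i)))"
  proof -
    have *: "(\<lambda>i. M i (p i))(k := d (M k (p k))) = (\<lambda>i. (M(k := \<lambda>j. d (M k j))) i (p i))" for p k
      by auto
    show ?thesis unfolding * by (simp add: sum_distrib_left)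
  qed
  also have "\<dots> = (\<Sum>k<n. dt n (M(k := \<lambda>j. d (M k j))))"
    unfolding dt_leibniz by (rule sum.swap)
  finally show ?thesis .
qed

end



lemma antisym_sum_zero:
  fixes g :: "nat \<Rightarrow> nat \<Rightarrow> 'r::comm_ring"
  assumes "finite S" "\<And>k r. k \<in> S \<Longrightarrow> r \<in> S \<Longrightarrow> g r k = - g k r"
    "\<And>k. k \<in> S \<Longrightarrow> g k k = 0"
  shows "(\<Sum>k\<in>S. \<Sum>r\<in>S. g k r) = 0"
  using assms
proof (induction S rule: finite_induct)
  case empty then show ?case by simp
next
  case (insert a S)
  have gaa: "g a a = 0" by (rule insert.prems(2)) simp
  have "(\<Sum>k\<in>insert a S. \<Sum>r\<in>insert a S. g k r)
      = g a a + (\<Sum>r\<in>S. g a r) + ((\<Sum>k\<in>S. g k a) + (\<Sum>k\<in>S. \<Sum>r\<in>S. g k r))"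
    using insert.hyps by (simp add: sum.distrib algebra_simps)
  also have "(\<Sum>k\<in>S. \<Sum>r\<in>S. g k r) = 0"
    by (rule insert.IH) (rule insert.prems, auto)+
  also have "(\<Sum>k\<in>S. g k a) = - (\<Sum>r\<in>S. g a r)"
  proof -
    have "(\<Sum>k\<in>S. g k a) = (\<Sum>k\<in>S. - g a k)"
      by (rule sum.cong[OF refl]) (rule insert.prems(1), auto)
    thus ?thesis by (simp add: sum_negf)
  qed
  finally show ?case using gaa by simp
qed

locale wr =
  fixes n :: nat and D :: "nat \<Rightarrow> 'r::comm_ring_1 \<Rightarrow> 'r"
  assumes n2: "2 \<le> n"
    and Dadd: "\<And>k x y. 1 \<le> k \<Longrightarrow> k < n \<Longrightarrow> D k (x + y) = D k x + D k y"
    and Dmul: "\<And>k x y. 1 \<le> k \<Longrightarrow> k < n \<Longrightarrow> D k (x * y) = D k x * y + x * D k y"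
    and Dcomm: "\<And>k l x. 1 \<le> k \<Longrightarrow> k < n \<Longrightarrow> 1 \<le> l \<Longrightarrow> l < n \<Longrightarrow> D k (D l x) = D l (D k x)"
begin

lemma Dder: "1 \<le> k \<Longrightarrow> k < n \<Longrightarrow> deriv_r (D k)"
  by unfold_locales (auto simp: Dadd Dmul)

definition Phi :: "'r \<Rightarrow> nat \<Rightarrow> 'r" where "Phi v k = (if k = 0 then v else D k v)"
definition MM :: "(nat \<Rightarrow> 'r) \<Rightarrow> nat \<Rightarrow> nat \<Rightarrow> 'r" where "MM u = (\<lambda>k j. Phi (u j) k)"
definition W :: "(nat \<Rightarrow> 'r) \<Rightarrow> 'r" where "W u = dt n (MM u)"

lemma MM_app: "MM u k j = Phi (u j) k" unfolding MM_def ..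

lemma MM_upd: "MM (u(j := v)) = (\<lambda>i. (MM u i)(j := Phi v i))"
  unfolding MM_def by (auto simp: fun_eq_iff)

lemma W_col: "j < n \<Longrightarrow> W (u(j := v)) = (\<Sum>k<n. Phi v k * cf n (MM u) k j)"
  unfolding W_def MM_upd by (rule dt_col_upd)

lemma Phi_add: "k < n \<Longrightarrow> Phi (x + y) k = Phi x k + Phi y k"
  unfolding Phi_def by (auto simp: Dadd)

lemma W_add: "j < n \<Longrightarrow> W (u(j := x + y)) = W (u(j := x)) + W (u(j := y))"
  unfolding W_col by (simp add: Phi_add sum.distrib algebra_simps)

definition eh :: "'r \<Rightarrow> nat \<Rightarrow> 'r" where "eh h k = (if k = 0 then 0 else D k h)"

lemma Phi_mult: "k < n \<Longrightarrow> Phi (h * v) k = h * Phi v k + v * eh h k"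
  unfolding Phi_def eh_def by (auto simp: Dmul algebra_simps)

lemma W_multcol:
  "j < n \<Longrightarrow> W (u(j := h * v)) = h * W (u(j := v)) + v * (\<Sum>k<n. eh h k * cf n (MM u) k j)"
  unfolding W_col by (simp add: Phi_mult sum.distrib algebra_simps sum_distrib_left)

lemma W_transposed: "(\<Sum>i<n. W (u(i := h * u i))) = of_nat n * h * W u"
proof -
  have s1: "(\<Sum>i<n. W (u(i := h * u i))) = (\<Sum>i<n. h * W u) + (\<Sum>i<n. u i * (\<Sum>k<n. eh h k * cf n (MM u) k i))"
    unfolding sum.distrib[symmetric]
  proof (rule sum.cong[OF refl])
    fix i assume i: "i \<in> {..<n}"
    show "W (u(i := h * u i)) = h * W u + u i * (\<Sum>k<n. eh h k * cf n (MM u) k i)"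
      using W_multcol[of i u h "u i"] i by simp
  qed
  have s2: "(\<Sum>i<n. u i * (\<Sum>k<n. eh h k * cf n (MM u) k i)) = (\<Sum>k<n. eh h k * (\<Sum>i<n. u i * cf n (MM u) k i))"
    unfolding sum_distrib_left
    apply (rule trans[OF sum.swap])
    apply (rule sum.cong[OF refl])
    apply (rule sum.cong[OF refl])
    apply (simp add: ac_simps)
    done
  have s3: "(\<Sum>k<n. eh h k * (\<Sum>i<n. u i * cf n (MM u) k i)) = 0"
  proof (rule sum.neutral, intro ballI)
    fix k assume k: "k \<in> {..<n}"
    show "eh h k * (\<Sum>i<n. u i * cf n (MM u) k i) = 0"
    proof (cases "k = 0")
      case True then show ?thesis by (simp add: eh_def)
    next
      case False
      have a: "(\<Sum>i<n. u i * cf n (MM u) k i) = dt n ((MM u)(k := MM u 0))"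
        using k by (simp add: dt_row_upd MM_app Phi_def)
      have b: "dt n ((MM u)(k := MM u 0)) = 0"
        by (rule dt_rows_eq[of k n 0]) (use k False n2 in auto)
      show ?thesis unfolding a b by simp
    qed
  qed
  show ?thesis unfolding s1 s2 s3 by simp
qed

lemma sum_split0: fixes m :: nat shows "0 < m \<Longrightarrow> (\<Sum>k<m. f k) = f 0 + (\<Sum>k\<in>{1..<m}. f k)"
proof -
  assume "0 < m"
  hence "{..<m} = insert 0 {1..<m}" by (auto simp: Suc_le_eq)
  thus ?thesis by simp
qed

lemma col_single:
  assumes "j < n" "k < n" "\<And>i. i < n \<Longrightarrow> i \<noteq> k \<Longrightarrow> A i j = 0"
  shows "dt n A = A k j * cf n A k j"
proof -
  have "dt n A = (\<Sum>i<n. A i j * cf n A i j)" by (rule dt_col[OF assms(1)])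
  also have "\<dots> = A k j * cf n A k j + (\<Sum>i\<in>{..<n} - {k}. A i j * cf n A i j)"
    using assms(2) by (subst sum.remove[of _ k]) auto
  also have "(\<Sum>i\<in>{..<n} - {k}. A i j * cf n A i j) = 0"
    by (rule sum.neutral) (use assms(3) in auto)
  finally show ?thesis by simp
qed

definition cc :: "(nat \<Rightarrow> 'r) \<Rightarrow> nat \<Rightarrow> 'r" where "cc y k = cf n (MM y) k 0"

lemma piola: "(\<Sum>k\<in>{1..<n}. D k (cc y k)) = - (of_nat (n - 1) * cc y 0)"
proof -
  define G where "G = (\<lambda>i j. if j = 0 then 0 else Phi (y j) i)"
  define e0 where "e0 = (\<lambda>j::nat. if j = 0 then (1::'r) else 0)"
  define Z where "Z = (\<lambda>k r j. if j = 0 then 0 else D k (Phi (y j) r))"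
  define Yk where "Yk = (\<lambda>k i. (MM y i)(0 := (if i = k then (1::'r) else 0)))"
  define H where "H = (\<lambda>k r. G(k := e0, r := Z k r))"
  have n0: "0 < n" using n2 by simp
  have ccY: "cc y k = dt n (Yk k)" if "k < n" for k
  proof -
    have "dt n (Yk k) = (\<Sum>i<n. (if i = k then 1 else 0) * cf n (MM y) i 0)"
      unfolding Yk_def by (rule dt_col_upd[OF n0])
    also have "\<dots> = (\<Sum>i<n. if i = k then cf n (MM y) i 0 else 0)"
      by (rule sum.cong) auto
    also have "\<dots> = cc y k" using that by (simp add: cc_def)
    finally show ?thesis by simp
  qed
  have G0: "dt n (G(0 := e0)) = cc y 0"
  proof -
    have "dt n (G(0 := e0)) = (G(0 := e0)) 0 0 * cf n (G(0 := e0)) 0 0"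
      by (rule col_single[OF n0 n0]) (simp add: G_def)
    also have "\<dots> = cf n (MM y) 0 0"
      by (simp add: e0_def, rule cf_indep[OF n0 n0]) (simp add: G_def MM_def)
    finally show ?thesis by (simp add: cc_def)
  qed
  have T: "D k (cc y k) = (\<Sum>r<n. dt n ((Yk k)(r := Z k r)))" if k: "1 \<le> k" "k < n" for k
  proof -
    interpret dk: deriv_r "D k" by (rule Dder[OF k])
    have eq: "(Yk k)(r := \<lambda>j. D k (Yk k r j)) = (Yk k)(r := Z k r)" for r
      by (auto simp: fun_eq_iff Yk_def Z_def MM_def)
    have "D k (cc y k) = (\<Sum>r<n. dt n ((Yk k)(r := \<lambda>j. D k (Yk k r j))))"
      unfolding ccY[OF k(2)] by (rule dk.dt_deriv)
    thus ?thesis unfolding eq .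
  qed
  have Tkk: "dt n ((Yk k)(k := Z k k)) = 0" if "k < n" for k
  proof -
    have "dt n ((Yk k)(k := Z k k)) = (\<Sum>i<n. ((Yk k)(k := Z k k)) i 0 * cf n ((Yk k)(k := Z k k)) i 0)"
      by (rule dt_col[OF n0])
    also have "\<dots> = 0" by (rule sum.neutral) (auto simp: Yk_def Z_def)
    finally show ?thesis .
  qed
  have TH: "dt n ((Yk k)(r := Z k r)) = dt n (H k r)" if "k < n" "r < n" "r \<noteq> k" for k r
  proof -
    have "dt n ((Yk k)(r := Z k r)) = ((Yk k)(r := Z k r)) k 0 * cf n ((Yk k)(r := Z k r)) k 0"
      by (rule col_single[OF n0 that(1)]) (use that in \<open>auto simp: Yk_def Z_def\<close>)
    also have "\<dots> = cf n (H k r) k 0"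
      using that by (simp add: Yk_def, intro cf_indep) (auto simp: H_def G_def Yk_def MM_def)
    also have "\<dots> = (H k r) k 0 * cf n (H k r) k 0"
      using that by (simp add: H_def e0_def)
    also have "\<dots> = dt n (H k r)"
      by (rule col_single[OF n0 that(1), symmetric]) (use that in \<open>auto simp: H_def G_def Z_def\<close>)
    finally show ?thesis .
  qed
  have Hanti: "dt n (H r k) = - dt n (H k r)" if "1 \<le> k" "k < n" "1 \<le> r" "r < n" "r \<noteq> k" for k r
  proof -
    have "Z k r = Z r k" using that by (auto simp: fun_eq_iff Z_def Phi_def Dcomm)
    hence "(H k r)(k := H k r r, r := H k r k) = H r k"
      using that by (auto simp: fun_eq_iff H_def)
    thus ?thesis using dt_swap[of k n r "H k r"] that by simp
  qed
  have H0: "dt n (H k 0) = - cc y 0" if "1 \<le> k" "k < n" for k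
  proof -
    have "Z k 0 = G k" using that by (auto simp: fun_eq_iff Z_def G_def Phi_def)
    hence "(H k 0)(k := H k 0 0, 0 := H k 0 k) = G(0 := e0)"
      using that by (auto simp: fun_eq_iff H_def)
    thus ?thesis using dt_swap[of k n 0 "H k 0"] that G0 by simp
  qed
  define g where "g = (\<lambda>k r. if r = k then 0 else dt n (H k r))"
  have Dk: "D k (cc y k) = - cc y 0 + (\<Sum>r\<in>{1..<n}. g k r)" if "1 \<le> k" "k < n" for k
  proof -
    have a: "D k (cc y k) = dt n ((Yk k)(0 := Z k 0)) + (\<Sum>r\<in>{1..<n}. dt n ((Yk k)(r := Z k r)))"
      unfolding T[OF that] by (rule sum_split0[OF n0])
    have b: "dt n ((Yk k)(0 := Z k 0)) = - cc y 0"
      using TH[of k 0] H0 that by simp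
    have c: "(\<Sum>r\<in>{1..<n}. dt n ((Yk k)(r := Z k r))) = (\<Sum>r\<in>{1..<n}. g k r)"
      by (rule sum.cong) (use that Tkk TH in \<open>auto simp: g_def\<close>)
    show ?thesis unfolding a b c ..
  qed
  have a: "(\<Sum>k\<in>{1..<n}. D k (cc y k)) = (\<Sum>k\<in>{1..<n}. - cc y 0 + (\<Sum>r\<in>{1..<n}. g k r))"
    by (rule sum.cong) (auto simp: Dk)
  have b: "(\<Sum>k\<in>{1..<n}. - cc y 0 + (\<Sum>r\<in>{1..<n}. g k r)) = - (of_nat (n - 1) * cc y 0) + (\<Sum>k\<in>{1..<n}. \<Sum>r\<in>{1..<n}. g k r)"
    by (simp only: sum.distrib sum_constant card_atLeastLessThan mult_minus_right)
  have c: "(\<Sum>k\<in>{1..<n}. \<Sum>r\<in>{1..<n}. g k r) = 0"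
    proof (rule antisym_sum_zero)
    fix k r assume kr: "k \<in> {1..<n}" "r \<in> {1..<n}"
    show "g r k = - g k r"
    proof (cases "r = k")
      case False
      then show ?thesis unfolding g_def using Hanti[of k r] kr by auto
    qed (simp add: g_def)
  qed (auto simp: g_def)
  show ?thesis unfolding a b c by simp
qed

definition EE :: "(nat \<Rightarrow> 'r) \<Rightarrow> 'r \<Rightarrow> 'r" where
  "EE y z = (\<Sum>l\<in>{1..<n}. cc y l * D l z)"

lemma ad_form: "W (y(0 := z)) = cc y 0 * z + EE y z"
proof -
  have n0: "0 < n" using n2 by simp
  have "W (y(0 := z)) = (\<Sum>k<n. Phi z k * cc y k)"
    unfolding W_col[OF n0] cc_def ..
  also have "\<dots> = Phi z 0 * cc y 0 + (\<Sum>k\<in>{1..<n}. Phi z k * cc y k)"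
    by (rule sum_split0[OF n0])
  also have "(\<Sum>k\<in>{1..<n}. Phi z k * cc y k) = EE y z"
    unfolding EE_def by (rule sum.cong) (auto simp: Phi_def mult.commute)
  also have "Phi z 0 * cc y 0 + EE y z = cc y 0 * z + EE y z" by (simp add: Phi_def mult.commute)
  finally show ?thesis .
qed

lemma EE_D: "1 \<le> k \<Longrightarrow> k < n \<Longrightarrow>
   EE y (D k v) = D k (EE y v) - (\<Sum>l\<in>{1..<n}. D k (cc y l) * D l v)"
proof -
  assume k: "1 \<le> k" "k < n"
  interpret dk: deriv_r "D k" by (rule Dder[OF k])
  have "D k (EE y v) = (\<Sum>l\<in>{1..<n}. D k (cc y l) * D l v + cc y l * D l (D k v))"
    unfolding EE_def dk.d_sum
  proof (rule sum.cong[OF refl])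
    fix l assume l: "l \<in> {1..<n}"
    show "D k (cc y l * D l v) = D k (cc y l) * D l v + cc y l * D l (D k v)"
      using l k by (simp add: dk.d_mul Dcomm[of k l])
  qed
  thus ?thesis by (simp add: sum.distrib EE_def)
qed

lemma EE_Phi: "k < n \<Longrightarrow>
   EE y (Phi v k) = Phi (EE y v) k - (if k = 0 then 0 else (\<Sum>l\<in>{1..<n}. D k (cc y l) * Phi v l))"
  using EE_D[of k y v] by (auto simp: Phi_def)

lemma EE_W: "EE y (W x) = (\<Sum>j<n. W (x(j := EE y (x j)))) - (\<Sum>k\<in>{1..<n}. D k (cc y k)) * W x"
proof -
  let ?c = "cf n (MM x)"
  have "EE y (W x) = (\<Sum>l\<in>{1..<n}. cc y l * (\<Sum>k<n. \<Sum>j<n. D l (MM x k j) * ?c k j))"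
    unfolding EE_def
  proof (rule sum.cong[OF refl])
    fix l assume l: "l \<in> {1..<n}"
    interpret dl: deriv_r "D l" by (rule Dder) (use l in auto)
    show "cc y l * D l (W x) = cc y l * (\<Sum>k<n. \<Sum>j<n. D l (MM x k j) * ?c k j)"
      unfolding W_def dl.dt_deriv by (simp add: dt_row_upd)
  qed
  also have "\<dots> = (\<Sum>k<n. \<Sum>j<n. EE y (MM x k j) * ?c k j)"
    unfolding EE_def
    apply (simp add: sum_distrib_left sum_distrib_right mult.assoc)
    apply (rule trans[OF sum.swap])
    apply (rule sum.cong[OF refl])
    apply (rule sum.swap)
    done
  also have "\<dots> = (\<Sum>k<n. \<Sum>j<n. Phi (EE y (x j)) k * ?c k j)
       - (\<Sum>k<n. \<Sum>j<n. (if k = 0 then 0 else (\<Sum>l\<in>{1..<n}. D k (cc y l) * Phi (x j) l)) * ?c k j)"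
    by (simp add: EE_Phi MM_app left_diff_distrib sum_subtractf)
  also have "(\<Sum>k<n. \<Sum>j<n. Phi (EE y (x j)) k * ?c k j) = (\<Sum>j<n. W (x(j := EE y (x j))))"
    by (subst sum.swap) (simp add: W_col)
  also have "(\<Sum>k<n. \<Sum>j<n. (if k = 0 then 0 else (\<Sum>l\<in>{1..<n}. D k (cc y l) * Phi (x j) l)) * ?c k j)
      = (\<Sum>k<n. if k = 0 then 0 else (\<Sum>l\<in>{1..<n}. D k (cc y l) * dt n ((MM x)(k := MM x l))))"
  proof (rule sum.cong[OF refl])
    fix k assume k: "k \<in> {..<n}"
    show "(\<Sum>j<n. (if k = 0 then 0 else (\<Sum>l\<in>{1..<n}. D k (cc y l) * Phi (x j) l)) * ?c k j)
      = (if k = 0 then 0 else (\<Sum>l\<in>{1..<n}. D k (cc y l) * dt n ((MM x)(k := MM x l))))"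
    proof (cases "k = 0")
      case False
      have "(\<Sum>j<n. (\<Sum>l\<in>{1..<n}. D k (cc y l) * Phi (x j) l) * ?c k j)
          = (\<Sum>j<n. \<Sum>l\<in>{1..<n}. D k (cc y l) * (Phi (x j) l * ?c k j))"
        by (simp add: sum_distrib_right mult.assoc)
      also have "\<dots> = (\<Sum>l\<in>{1..<n}. \<Sum>j<n. D k (cc y l) * (Phi (x j) l * ?c k j))"
        by (rule sum.swap)
      also have "\<dots> = (\<Sum>l\<in>{1..<n}. D k (cc y l) * dt n ((MM x)(k := MM x l)))"
        using k by (simp add: dt_row_upd MM_app sum_distrib_left)
      finally show ?thesis using False by simp
    qed simp
  qed
  also have "\<dots> = (\<Sum>k<n. if k = 0 then 0 else D k (cc y k) * W x)"
  proof (rule sum.cong[OF refl])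
    fix k assume k: "k \<in> {..<n}"
    show "(if k = 0 then 0 else (\<Sum>l\<in>{1..<n}. D k (cc y l) * dt n ((MM x)(k := MM x l))))
        = (if k = 0 then 0 else D k (cc y k) * W x)"
    proof (cases "k = 0")
      case False
      have "(\<Sum>l\<in>{1..<n}. D k (cc y l) * dt n ((MM x)(k := MM x l)))
          = (\<Sum>l\<in>{1..<n}. if l = k then D k (cc y k) * W x else 0)"
      proof (rule sum.cong[OF refl])
        fix l assume l: "l \<in> {1..<n}"
        show "D k (cc y l) * dt n ((MM x)(k := MM x l)) = (if l = k then D k (cc y k) * W x else 0)"
        proof (cases "l = k")
          case True then show ?thesis by (simp add: W_def)
        next
          case False
          have "dt n ((MM x)(k := MM x l)) = 0"
            by (rule dt_rows_eq[of k n l]) (use k l False in auto)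
          thus ?thesis using False by simp
        qed
      qed
      also have "\<dots> = D k (cc y k) * W x" using k False by simp
      finally show ?thesis using False by simp
    qed simp
  qed
  also have "\<dots> = (\<Sum>k\<in>{1..<n}. D k (cc y k)) * W x"
    using n2 by (simp add: sum_split0 sum_distrib_right)
  finally show ?thesis .
qed

lemma W_filippov: "W (y(0 := W x)) = (\<Sum>i<n. W (x(i := W (y(0 := x i)))))"
proof -
  have "(\<Sum>i<n. W (x(i := W (y(0 := x i))))) = (\<Sum>i<n. W (x(i := cc y 0 * x i)) + W (x(i := EE y (x i))))"
    by (rule sum.cong[OF refl]) (simp add: ad_form W_add)
  also have "\<dots> = of_nat n * cc y 0 * W x + (\<Sum>i<n. W (x(i := EE y (x i))))"
    by (simp add: sum.distrib W_transposed)
  finally have R: "(\<Sum>i<n. W (x(i := W (y(0 := x i))))) = of_nat n * cc y 0 * W x + (\<Sum>i<n. W (x(i := EE y (x i))))" .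
  have nn: "(of_nat n :: 'r) = 1 + of_nat (n - 1)" using n2 by (simp add: of_nat_diff)
  have L: "W (y(0 := W x)) = cc y 0 * W x + EE y (W x)" by (rule ad_form)
  show ?thesis unfolding L R EE_W piola nn by (simp add: algebra_simps)
qed

lemma W_skew: "i < n \<Longrightarrow> j < n \<Longrightarrow> i \<noteq> j \<Longrightarrow> W (u(i := u j, j := u i)) = - W u"
proof -
  assume a: "i < n" "j < n" "i \<noteq> j"
  define T where "T = (\<lambda>a b. Phi (u a) b)"
  have "W (u(i := u j, j := u i)) = dt n (\<lambda>a b. MM (u(i := u j, j := u i)) b a)"
    unfolding W_def by (rule dt_transpose[symmetric])
  also have "(\<lambda>a b. MM (u(i := u j, j := u i)) b a) = T(i := T j, j := T i)"
    by (auto simp: fun_eq_iff T_def MM_app)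
  also have "dt n (T(i := T j, j := T i)) = - dt n T" by (rule dt_swap[OF a])
  also have "dt n T = W u" unfolding W_def T_def MM_def by (rule dt_transpose)
  finally show ?thesis .
qed

lemma W_strong_aux:
  "y1 * W (x(0 := y2)) - y2 * W (x(0 := y1))
   + (\<Sum>i\<in>{1..n-1}. (-1)^(i-1) * (x i * W (\<lambda>k. if k = 0 then y1 else if k = 1 then y2
                                 else if k - 1 < i then x (k - 1) else x k))) = 0"
proof -
  define V where "V = (\<lambda>c. if c = 0 then y1 else if c = 1 then y2 else x (c - 1))"
  define B where "B = (\<lambda>r c. if r = 0 then V c else Phi (V c) (r - 1))"
  define f where "f = (\<lambda>c. V c * ((-1)^c * W (\<lambda>c'. V (if c' < c then c' else Suc c'))))"
  define T where "T = (\<Sum>i\<in>{1..n-1}. (-1)^(i-1) * (x i * W (\<lambda>k. if k = 0 then y1 else if k = 1 then y2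
                                 else if k - 1 < i then x (k - 1) else x k)))"
  have z1: "dt (Suc n) B = 0"
    by (rule dt_rows_eq[of 0 _ 1]) (use n2 in \<open>auto simp: B_def Phi_def\<close>)
  have z2: "dt (Suc n) B = (\<Sum>c<Suc n. B 0 c * cf (Suc n) B 0 c)" by (rule dt_row) simp
  have z3: "(\<Sum>c<Suc n. B 0 c * cf (Suc n) B 0 c) = (\<Sum>c<Suc n. f c)"
  proof (rule sum.cong[OF refl])
    fix c assume c: "c \<in> {..<Suc n}"
    have e: "(\<lambda>r c'. B (Suc r) (if c' < c then c' else Suc c')) = MM (\<lambda>c'. V (if c' < c then c' else Suc c'))"
      by (auto simp: fun_eq_iff B_def MM_app)
    have "cf (Suc n) B 0 c = (-1)^c * dt n (\<lambda>r c'. B (Suc r) (if c' < c then c' else Suc c'))"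
      using c by (simp add: cf_minor)
    then have "cf (Suc n) B 0 c = (-1)^c * W (\<lambda>c'. V (if c' < c then c' else Suc c'))"
      unfolding e W_def .
    then show "B 0 c * cf (Suc n) B 0 c = f c" by (simp add: f_def B_def)
  qed
  have a: "(\<Sum>c<Suc n. f c) = f 0 + (\<Sum>i<n. f (Suc i))" by (rule sum.lessThan_Suc_shift)
  have b: "(\<Sum>i<n. f (Suc i)) = f 1 + (\<Sum>i\<in>{1..<n}. f (Suc i))"
    using sum_split0[of n "\<lambda>i. f (Suc i)"] n2 by simp
  have f0: "f 0 = y1 * W (x(0 := y2))"
  proof -
    have e: "(\<lambda>c'. V (if c' < 0 then c' else Suc c')) = x(0 := y2)" by (auto simp: V_def fun_eq_iff)
    show ?thesis unfolding f_def e by (simp add: V_def)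
  qed
  have f1: "f 1 = - (y2 * W (x(0 := y1)))"
  proof -
    have e: "(\<lambda>c'. V (if c' < 1 then c' else Suc c')) = x(0 := y1)" by (auto simp: V_def fun_eq_iff)
    show ?thesis unfolding f_def e by (simp add: V_def)
  qed
  have fS: "(\<Sum>i\<in>{1..<n}. f (Suc i)) = T"
    unfolding T_def
  proof (rule sum.cong)
    show "{1..<n} = {1..n-1}" using n2 by auto
  next
    fix i assume i: "i \<in> {1..n-1}"
    have e: "(\<lambda>c'. V (if c' < Suc i then c' else Suc c')) = (\<lambda>k. if k = 0 then y1 else if k = 1 then y2
                                 else if k - 1 < i then x (k - 1) else x k)"
      using i by (auto simp: fun_eq_iff V_def)
    obtain j where j: "i = Suc j" using i by (cases i) auto
    show "f (Suc i) = (-1)^(i-1) * (x i * W (\<lambda>k. if k = 0 then y1 else if k = 1 then y2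
                                 else if k - 1 < i then x (k - 1) else x k))"
      unfolding f_def e using i j by (simp add: V_def)
  qed
  have "y1 * W (x(0 := y2)) - y2 * W (x(0 := y1)) + T = f 0 + (f 1 + (\<Sum>i\<in>{1..<n}. f (Suc i)))"
    unfolding f0 f1 fS by simp
  also have "\<dots> = 0" unfolding b[symmetric] a[symmetric] z3[symmetric] z2[symmetric] by (rule z1)
  finally show ?thesis unfolding T_def .
qed

lemma W_strong:
  "y1 * W (x(0 := h * y2)) - y2 * W (x(0 := h * y1))
   + (\<Sum>i\<in>{1..n-1}. (-1)^(i-1) * (h * x i * W (\<lambda>k. if k = 0 then y1 else if k = 1 then y2
                                 else if k - 1 < i then x (k - 1) else x k))) = 0"
proof -
  have n0: "0 < n" using n2 by simp
  define T where "T = (\<Sum>i\<in>{1..n-1}. (-1)^(i-1) * (x i * W (\<lambda>k. if k = 0 then y1 else if k = 1 then y2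
                                 else if k - 1 < i then x (k - 1) else x k)))"
  have a: "y1 * W (x(0 := h * y2)) - y2 * W (x(0 := h * y1))
     = h * (y1 * W (x(0 := y2)) - y2 * W (x(0 := y1)))"
    unfolding W_multcol[OF n0] by (simp add: algebra_simps)
  have b: "(\<Sum>i\<in>{1..n-1}. (-1)^(i-1) * (h * x i * W (\<lambda>k. if k = 0 then y1 else if k = 1 then y2
                                 else if k - 1 < i then x (k - 1) else x k))) = h * T"
    unfolding T_def sum_distrib_left by (rule sum.cong[OF refl]) (simp add: ac_simps)
  have c: "y1 * W (x(0 := y2)) - y2 * W (x(0 := y1)) + T = 0"
    unfolding T_def by (rule W_strong_aux)
  have "h * (y1 * W (x(0 := y2)) - y2 * W (x(0 := y1))) + h * T = h * (y1 * W (x(0 := y2)) - y2 * W (x(0 := y1)) + T)"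
    by (simp add: distrib_left)
  also have "\<dots> = 0" unfolding c by simp
  finally show ?thesis unfolding a b .
qed

end

lemma lprod_Suc: "1 \<le> n \<Longrightarrow> lprod (Suc n) f = lprod n f * f n"
  unfolding lprod_def by simp

lemma iota_lprod: "1 \<le> n \<Longrightarrow> iota (lprod n f) = (\<Prod>i=0..<n. iota (f i))"
proof (induction n rule: dec_induct)
  case base then show ?case by (simp add: lprod_def)
next
  case (step m) then show ?case by (simp add: lprod_Suc iota_mult)
qed

lemma iota_ldet: "1 \<le> n \<Longrightarrow> iota (ldet n M) = dt n (\<lambda>i j. iota (M i j))"
  unfolding ldet_def dt_leibniz iota_sum lessThan_atLeast0
  by (rule sum.cong[OF refl]) (simp add: iota_minus iota_lprod sign_def)

lemma iota_upd: "(\<lambda>j. iota ((f(a := b)) j)) = (\<lambda>j. iota (f j))(a := iota b)"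
  by auto

definition asp :: "'a::comm_ring uz \<Rightarrow> 'a" where "asp x = (case x of UZ m a \<Rightarrow> a)"
definition isp :: "'a::comm_ring uz \<Rightarrow> int" where "isp x = (case x of UZ m a \<Rightarrow> m)"

lemma iota_times_any: "iota p * C = iota (zsc (isp C) p + p * asp C)"
  by (cases C) (simp add: iota_def isp_def asp_def)

theorem mainTheorem2:
  fixes sm :: "complex \<Rightarrow> 'a::comm_ring \<Rightarrow> 'a"
    and D :: "nat \<Rightarrow> 'a \<Rightarrow> 'a"
    and n :: nat
  assumes "n \<ge> 2"
    and "complex_algebra sm"
    and "\<forall>i\<in>{1..n-1}. is_derivation sm (D i)"
    and "\<forall>i\<in>{1..n-1}. \<forall>j\<in>{1..n-1}. \<forall>x. D i (D j x) = D j (D i x)"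
  shows "strong_transposed_Poisson_n_Lie sm n (wdet D n)"
proof -
  note n2 = assms(1)
  have ca: "sm a (x + y) = sm a x + sm a y" "sm (a + b) x = sm a x + sm b x"
     "sm (a * b) x = sm a (sm b x)" "sm 1 x = x" "sm a (x * y) = sm a x * y" for a b x y
    using assms(2) unfolding complex_algebra_def by auto
  have Dd: "D k (x + y) = D k x + D k y" "D k (sm a x) = sm a (D k x)" "D k (x * y) = D k x * y + x * D k y"
    if "1 \<le> k" "k < n" for k x y a
    using assms(3) that unfolding is_derivation_def by auto
  have Dc: "D k (D l x) = D l (D k x)" if "1 \<le> k" "k < n" "1 \<le> l" "l < n" for k l x
    using assms(4) that by auto
  interpret R: wr n "\<lambda>k. liftD (D k)"
  proof
    show "2 \<le> n" by (rule n2)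
    fix k x y assume k: "1 \<le> k" "k < n"
    show "liftD (D k) (x + y) = liftD (D k) x + liftD (D k) y"
      by (rule liftD_add) (use Dd k in auto)
    show "liftD (D k) (x * y) = liftD (D k) x * y + x * liftD (D k) y"
      by (rule liftD_mul) (use Dd k in auto)
  next
    fix k l x assume "1 \<le> k" "k < n" "1 \<le> l" "l < n"
    then show "liftD (D k) (liftD (D l) x) = liftD (D l) (liftD (D k) x)"
      by (cases x) (simp add: liftD_def Dc)
  qed
  have iw: "iota (wdet D n u) = R.W (\<lambda>j. iota (u j))" for u
  proof -
    have "iota (wdet D n u) = dt n (\<lambda>i j. iota (if i = 0 then u j else D i (u j)))"
      unfolding wdet_def by (rule iota_ldet) (use n2 in simp)
    also have "\<dots> = R.W (\<lambda>j. iota (u j))"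
      unfolding R.W_def R.MM_def R.Phi_def by (rule dt_ext) (simp add: liftD_iota)
    finally show ?thesis .
  qed
  have wd_eq: "wdet D n u = wdet D n v \<longleftrightarrow> R.W (\<lambda>j. iota (u j)) = R.W (\<lambda>j. iota (v j))" for u v
    by (metis iw iota_inj)
  have sm0: "sm 0 x = 0" for x using ca(2)[of 0 0 x] by simp
  have smnat: "iota (sm (of_nat m) x) = of_nat m * iota x" for m x
  proof (induction m)
    case 0 then show ?case by (simp add: sm0 iota_0)
  next
    case (Suc m)
    have "sm (of_nat (Suc m)) x = sm 1 x + sm (of_nat m) x" by (simp add: ca(2)[symmetric] add.commute)
    then show ?case using Suc by (simp add: ca(4) iota_add algebra_simps)
  qed
  have smm1: "iota (sm ((-1)^m) x) = (-1)^m * iota x" for m x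
  proof -
    have m1: "sm (-1) x = - x"
      using ca(2)[of 1 "-1" x] by (simp add: sm0 ca(4) eq_neg_iff_add_eq_0 add.commute)
    show ?thesis
      by (cases "even m") (simp_all add: ca(4) m1 iota_minus)
  qed
  have AO: "args_only n (wdet D n)"
    unfolding args_only_def
  proof (intro allI impI)
    fix u v :: "nat \<Rightarrow> 'a" assume uv: "\<forall>i<n. u i = v i"
    show "wdet D n u = wdet D n v" unfolding wd_eq R.W_def
      by (rule dt_ext) (simp add: R.MM_app uv)
  qed
  define Psi where "Psi = (\<lambda>v r. if r = 0 then v else D r v)"
  have wcol: "wdet D n (u(k := v)) = (\<Sum>r<n. zsc (isp (cf n (R.MM (\<lambda>j. iota (u j))) r k)) (Psi v r)
        + Psi v r * asp (cf n (R.MM (\<lambda>j. iota (u j))) r k))" if k: "k < n" for u k v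
  proof -
    have "iota (wdet D n (u(k := v))) = R.W ((\<lambda>j. iota (u j))(k := iota v))"
      unfolding iw by (rule arg_cong[where f=R.W]) auto
    also have "\<dots> = (\<Sum>r<n. R.Phi (iota v) r * cf n (R.MM (\<lambda>j. iota (u j))) r k)"
      by (rule R.W_col[OF k])
    also have "\<dots> = iota (\<Sum>r<n. zsc (isp (cf n (R.MM (\<lambda>j. iota (u j))) r k)) (Psi v r)
        + Psi v r * asp (cf n (R.MM (\<lambda>j. iota (u j))) r k))"
      unfolding iota_sum
      by (rule sum.cong[OF refl]) (simp add: R.Phi_def Psi_def liftD_iota iota_times_any)
    finally show ?thesis by (simp add: iota_inj)
  qed
  have smsum: "sm a (sum f A) = (\<Sum>x\<in>A. sm a (f x))" for a f and A :: "nat set"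
    by (induction A rule: infinite_finite_induct) (auto simp: ca(1) sm0 ca(5)[of a 0 0, simplified])
  have smzsc: "sm a (zsc m x) = zsc m (sm a x)" for a m x
    by (rule add_zsc) (rule ca(1))
  have smr: "sm a (x * y) = x * sm a y" for a x y
    by (metis ca(5) mult.commute)
  have Psi_lin: "Psi (sm a x + sm b y) r = sm a (Psi x r) + sm b (Psi y r)" if "r < n" for a b x y r
    using that by (auto simp: Psi_def Dd)
  have MLin: "n_multilinear sm n (wdet D n)"
    unfolding n_multilinear_def
  proof (intro allI impI)
    fix u k a b x y assume k: "k < n"
    show "wdet D n (u(k := sm a x + sm b y)) = sm a (wdet D n (u(k := x))) + sm b (wdet D n (u(k := y)))"
      unfolding wcol[OF k] smsum sum.distrib[symmetric]
      by (rule sum.cong[OF refl])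
         (simp add: Psi_lin zsc_add_x smzsc ca(1) ca(5) distrib_right algebra_simps)
  qed
  have SK: "skew_symmetric n (wdet D n)"
    unfolding skew_symmetric_def
  proof (intro allI impI)
    fix u :: "nat \<Rightarrow> 'a" and i j assume a: "i < n" "j < n" "i \<noteq> j"
    have "iota (wdet D n (u(i := u j, j := u i))) = R.W ((\<lambda>j. iota (u j))(i := iota (u j), j := iota (u i)))"
      unfolding iw by (rule arg_cong[where f=R.W]) auto
    also have "\<dots> = - R.W (\<lambda>j. iota (u j))" using R.W_skew[OF a, of "\<lambda>t. iota (u t)"] by simp
    finally show "wdet D n (u(i := u j, j := u i)) = - wdet D n u"
      by (simp add: iw[symmetric] iota_minus[symmetric] iota_inj)
  qed
  have FI: "filippov n (wdet D n)"
    unfolding filippov_def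
  proof (intro allI)
    fix x y :: "nat \<Rightarrow> 'a"
    have "iota (wdet D n (y(0 := wdet D n x))) = R.W ((\<lambda>j. iota (y j))(0 := R.W (\<lambda>j. iota (x j))))"
      unfolding iw by (rule arg_cong[where f=R.W]) (auto simp: iw)
    also have "\<dots> = (\<Sum>i<n. R.W ((\<lambda>j. iota (x j))(i := R.W ((\<lambda>j. iota (y j))(0 := iota (x i))))))"
      by (rule R.W_filippov)
    also have "\<dots> = iota (\<Sum>i<n. wdet D n (x(i := wdet D n (y(0 := x i)))))"
      unfolding iota_sum iw
      by (rule sum.cong[OF refl]) (simp only: iw iota_upd)
    finally show "wdet D n (y(0 := wdet D n x)) = (\<Sum>i<n. wdet D n (x(i := wdet D n (y(0 := x i)))))"
      by (simp add: iota_inj)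
  qed
  have TR: "sm (of_nat n) (h * wdet D n a) = (\<Sum>i<n. wdet D n (a(i := h * a i)))" for h a
  proof -
    have "iota (sm (of_nat n) (h * wdet D n a)) = of_nat n * iota h * R.W (\<lambda>j. iota (a j))"
      by (simp add: smnat iota_mult iw mult.assoc)
    also have "\<dots> = (\<Sum>i<n. R.W ((\<lambda>j. iota (a j))(i := iota h * iota (a i))))"
      by (rule R.W_transposed[symmetric])
    also have "\<dots> = iota (\<Sum>i<n. wdet D n (a(i := h * a i)))"
      unfolding iota_sum iw
      by (rule sum.cong[OF refl], rule arg_cong[where f=R.W]) (auto simp: iota_mult fun_eq_iff)
    finally show ?thesis by (simp add: iota_inj)
  qed
  have ST: "y1 * wdet D n (x(0 := h * y2)) - y2 * wdet D n (x(0 := h * y1))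
        + (\<Sum>i\<in>{1..n-1}. sm ((-1) ^ (i - 1))
             (h * x i * wdet D n (\<lambda>k. if k = 0 then y1 else if k = 1 then y2
                                 else if k - 1 < i then x (k - 1) else x k))) = 0" for h y1 y2 x
  proof -
    let ?x = "\<lambda>j. iota (x j)"
    have "iota (y1 * wdet D n (x(0 := h * y2)) - y2 * wdet D n (x(0 := h * y1))
        + (\<Sum>i\<in>{1..n-1}. sm ((-1) ^ (i - 1))
             (h * x i * wdet D n (\<lambda>k. if k = 0 then y1 else if k = 1 then y2
                                 else if k - 1 < i then x (k - 1) else x k))))
      = iota y1 * R.W (?x(0 := iota h * iota y2)) - iota y2 * R.W (?x(0 := iota h * iota y1))
        + (\<Sum>i\<in>{1..n-1}. (-1)^(i-1) * (iota h * ?x i * R.W (\<lambda>k. if k = 0 then iota y1 else if k = 1 then iota y2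
                                 else if k - 1 < i then ?x (k - 1) else ?x k)))"
    proof -
      have e1: "(\<lambda>j. iota ((x(0 := h * y)) j)) = ?x(0 := iota h * iota y)" for y
        by (auto simp: fun_eq_iff iota_mult)
      have e2: "(\<lambda>j. iota ((\<lambda>k. if k = 0 then y1 else if k = 1 then y2
                                 else if k - 1 < i then x (k - 1) else x k) j))
          = (\<lambda>k. if k = 0 then iota y1 else if k = 1 then iota y2
                                 else if k - 1 < i then ?x (k - 1) else ?x k)" for i
        by (auto simp: fun_eq_iff)
      show ?thesis
        by (simp only: iota_add iota_diff iota_mult iota_sum smm1 iw e1 e2)
    qed
    also have "\<dots> = 0" by (rule R.W_strong)
    finally show ?thesis by (simp add: iota_inj iota_0[symmetric])
  qed
  show ?thesis
    unfolding strong_transposed_Poisson_n_Lie_def transposed_Poisson_n_Lie_def n_Lie_def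
    using assms(2) AO MLin SK FI TR ST by blast
qed

end
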